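(* Let $\alpha\in(\frac12,1)$ and run Algorithm 1 on vectors $g_t$ with $\|g_t\|\le G$ and learning rates $$\eta_t=\frac{G^{2\alpha-1}}{\big(2G^2+\sum_{i=1}^{t-1}\|g_i\|^2\big)^\alpha}.$$ Then $S_T\le\sqrt{4+\frac1{2\alpha-1}}$ for every $T\ge0$; in particular $S_\infty=\lim_{T\to\infty}S_T\le\sqrt{4+\frac1{2\alpha-1}}$.
   Context: $\|\cdot\|$ is the Euclidean norm, $G>0$. In Algorithm 1, $S_0^2=4$ and for $t\ge1$, with $\ell_t=\eta_tg_t$, $S_t^2=S_{t-1}^2+\|\ell_t\|^2$ ($S_t>0$). *)

theory Defs
  imports "HOL-Analysis.Analysis"
begin

definition eta :: "real \<Rightarrow> real \<Rightarrow> (nat \<Rightarrow> 'a::real_normed_vector) \<Rightarrow> nat \<Rightarrow> real" where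
  "eta G \<alpha> g t = G powr (2*\<alpha> - 1) / (2 * G^2 + (\<Sum>i=1..<t. (norm (g i))^2)) powr \<alpha>"

text \<open>S_T with S_0^2 = 4 and S_t^2 = S_{t-1}^2 + |eta_t g_t|^2, S_t > 0.\<close>
definition S :: "real \<Rightarrow> real \<Rightarrow> (nat \<Rightarrow> 'a::real_normed_vector) \<Rightarrow> nat \<Rightarrow> real" where
  "S G \<alpha> g T = sqrt (4 + (\<Sum>t=1..T. (norm (eta G \<alpha> g t *\<^sub>R g t))^2))"

end

theory Submission
  imports Defs
begin

lemma key_ineq:
  fixes x a b :: real
  assumes x: "x > 0" and a: "a \<ge> 0" and b: "b > 0"
  shows "a / (x + a) powr (1 + b) \<le> (x powr (-b) - (x + a) powr (-b)) / b"
proof -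
  define y where "y = x + a"
  have y: "y > 0" using x a y_def by simp
  define r where "r = x / y"
  have r0: "r > 0" using x y r_def by simp
  have r1: "r \<le> 1" using x a y_def r_def by simp
  have "1 + b * (1 - r) \<le> 1 - b * ln r"
    using mult_left_mono[OF ln_le_minus_one[OF r0], of b] b by (simp add: algebra_simps)
  also have "\<dots> \<le> exp (- b * ln r)" using exp_ge_add_one_self[of "- b * ln r"] by simp
  also have "\<dots> = r powr (-b)" using r0 by (simp add: powr_def)
  finally have h: "1 + b * (1 - r) \<le> r powr (-b)" .
  have xr: "x = r * y" using y r_def by simp
  have e1: "x powr (-b) = r powr (-b) * y powr (-b)" using xr r0 y by (simp add: powr_mult)
  have e2: "y powr (1 + b) = y * y powr b" using y by (simp add: powr_add)
  have e3: "y powr (-b) = 1 / y powr b" using y by (simp add: powr_minus divide_inverse)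
  have a_eq: "a = y * (1 - r)" using xr y_def by (simp add: algebra_simps)
  have yb: "y powr b > 0" using y by simp
  have "a / y powr (1 + b) = (1 - r) / y powr b" using a_eq e2 y yb by simp
  also have "\<dots> \<le> (r powr (-b) - 1) / b / y powr b"
    using h b yb by (intro divide_right_mono) (auto simp: field_simps)
  also have "\<dots> = (x powr (-b) - y powr (-b)) / b"
    using e1 e3 yb b by (simp add: field_simps)
  finally show ?thesis by (simp add: y_def)
qed

theorem lemma22:
  fixes g :: "nat \<Rightarrow> 'a::euclidean_space" and G \<alpha> :: real
  assumes "G > 0" and "1/2 < \<alpha>" and "\<alpha> < 1"
    and "\<And>t. t \<ge> 1 \<Longrightarrow> norm (g t) \<le> G"
  shows "(\<forall>T. S G \<alpha> g T \<le> sqrt (4 + 1 / (2*\<alpha> - 1)))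
         \<and> convergent (S G \<alpha> g) \<and> lim (S G \<alpha> g) \<le> sqrt (4 + 1 / (2*\<alpha> - 1))"
proof -
  define b where "b = 2*\<alpha> - 1"
  have b: "b > 0" using assms b_def by simp
  define x where "x t = G^2 + (\<Sum>i=1..<t. (norm (g i))^2)" for t
  have xpos: "x t \<ge> G^2" for t unfolding x_def by (simp add: sum_nonneg)
  have xp: "x t > 0" for t using xpos[of t] assms(1) by (smt (verit) zero_less_power)
  have xs: "x (Suc t) = x t + (norm (g t))^2" if "t \<ge> 1" for t
    using that unfolding x_def by simp
  have termb: "(norm (eta G \<alpha> g t *\<^sub>R g t))^2 \<le> G powr (2*b) * ((x t powr (-b) - x (Suc t) powr (-b)) / b)"
    if t: "t \<ge> 1" for t
  proof -
    define A where "A = (\<Sum>i=1..<t. (norm (g i))^2)"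
    have A0: "A \<ge> 0" unfolding A_def by (simp add: sum_nonneg)
    have gt: "(norm (g t))^2 \<le> G^2" using assms(4)[OF t] by (simp add: power_mono)
    have P: "2 * G^2 + A > 0" using A0 assms(1) by (smt (verit) zero_less_power)
    have et: "eta G \<alpha> g t = G powr b / (2 * G^2 + A) powr \<alpha>"
      unfolding eta_def A_def b_def by simp
    have "(norm (eta G \<alpha> g t *\<^sub>R g t))^2 = (eta G \<alpha> g t)^2 * (norm (g t))^2"
      by (simp add: power_mult_distrib)
    also have "(eta G \<alpha> g t)^2 = G powr (2*b) / (2 * G^2 + A) powr (1 + b)"
    proof -
      have "(eta G \<alpha> g t)^2 = (G powr b * G powr b) / ((2 * G^2 + A) powr \<alpha> * (2 * G^2 + A) powr \<alpha>)"
        unfolding et by (simp add: power2_eq_square)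
      also have "\<dots> = G powr (2*b) / (2 * G^2 + A) powr (1 + b)"
      proof -
        have e1: "G powr b * G powr b = G powr (2*b)" by (metis powr_add mult_2)
        have ab: "1 + b = \<alpha> + \<alpha>" unfolding b_def by simp
        have e2: "(2 * G^2 + A) powr \<alpha> * (2 * G^2 + A) powr \<alpha> = (2 * G^2 + A) powr (1 + b)"
          unfolding ab by (rule powr_add[symmetric])
        show ?thesis by (simp only: e1 e2)
      qed
      finally show ?thesis .
    qed
    also have "(2 * G^2 + A) powr (1 + b) \<ge> x (Suc t) powr (1 + b)"
    proof -
      have "x (Suc t) \<le> 2 * G^2 + A" using xs[OF t] gt unfolding x_def A_def by simp
      thus ?thesis using b xp[of "Suc t"] by (intro powr_mono2) auto
    qed
    hence "G powr (2*b) / (2 * G^2 + A) powr (1 + b) \<le> G powr (2*b) / x (Suc t) powr (1 + b)"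
      using xp[of "Suc t"] P by (intro divide_left_mono) auto
    hence "G powr (2*b) / (2 * G^2 + A) powr (1 + b) * (norm (g t))^2
        \<le> G powr (2*b) / x (Suc t) powr (1 + b) * (norm (g t))^2"
      by (intro mult_right_mono) auto
    also have "\<dots> = G powr (2*b) * ((norm (g t))^2 / (x t + (norm (g t))^2) powr (1 + b))"
      using xs[OF t] by simp
    also have "\<dots> \<le> G powr (2*b) * ((x t powr (-b) - (x t + (norm (g t))^2) powr (-b)) / b)"
      by (intro mult_left_mono key_ineq xp b) auto
    finally show ?thesis using xs[OF t] by simp
  qed
  have tele: "(\<Sum>t=1..T. (x t powr (-b) - x (Suc t) powr (-b))) = x 1 powr (-b) - x (Suc T) powr (-b)" for T
    by (induction T) auto
  have x1: "x 1 = G^2" unfolding x_def by simp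
  have bound: "(\<Sum>t=1..T. (norm (eta G \<alpha> g t *\<^sub>R g t))^2) \<le> 1 / b" for T
  proof -
    have "(\<Sum>t=1..T. (norm (eta G \<alpha> g t *\<^sub>R g t))^2)
        \<le> (\<Sum>t=1..T. G powr (2*b) * ((x t powr (-b) - x (Suc t) powr (-b)) / b))"
      by (intro sum_mono termb) auto
    also have "\<dots> = G powr (2*b) / b * (\<Sum>t=1..T. (x t powr (-b) - x (Suc t) powr (-b)))"
      by (simp add: sum_distrib_left sum_divide_distrib[symmetric])
    also have "\<dots> = G powr (2*b) / b * (x 1 powr (-b) - x (Suc T) powr (-b))" by (simp only: tele)
    also have "\<dots> \<le> G powr (2*b) / b * x 1 powr (-b)"
      using b xp[of "Suc T"] by (intro mult_left_mono) auto
    also have "x 1 powr (-b) = G powr (-2*b)" using x1 assms(1)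
    proof -
      have "G^2 = G powr 2" using assms(1) powr_realpow[of G 2] by simp
      hence "x 1 powr (-b) = (G powr 2) powr (-b)" using x1 by simp
      also have "\<dots> = G powr (-2*b)" by (simp add: powr_powr)
      finally show ?thesis .
    qed
    also have "G powr (2*b) / b * G powr (-2*b) = 1 / b"
    proof -
      have "G powr (2*b) * G powr (-2*b) = 1" using powr_add[of G "2*b" "-2*b"] assms(1) by simp
      thus ?thesis by simp
    qed
    finally show ?thesis .
  qed
  have Sb: "S G \<alpha> g T \<le> sqrt (4 + 1 / (2*\<alpha> - 1))" for T
    unfolding S_def using bound[of T] b_def by simp
  have inc: "incseq (S G \<alpha> g)"
    unfolding incseq_Suc_iff S_def by simp
  obtain L where L: "S G \<alpha> g \<longlonglongrightarrow> L" using incseq_convergent[OF inc, of "sqrt (4 + 1 / (2*\<alpha> - 1))"] Sb by blast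
  have conv: "convergent (S G \<alpha> g)" using L convergentI by blast
  have "lim (S G \<alpha> g) \<le> sqrt (4 + 1 / (2*\<alpha> - 1))"
    using LIMSEQ_le_const2[OF L] Sb limI[OF L] by auto
  thus ?thesis using Sb conv by blast
qed

end
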